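(* Let $n\ge2$, $R_0>0$, $X\subset\mathbb R^n$, and $U:=\{x\in\mathbb R^n:\operatorname{dist}(x,X)\le R_0\}$. Let $N\ge1$ be an integer, $0<R\le3^{1-N}R_0$, and let $B_j=\overline B_R(x_j)$, $1\le j\le N$, be (not necessarily disjoint) closed balls with $x_j\in X$. For $x\in X$ and $0<r\le R_0$ set $J(x,r):=\{j:B_j\subset B_r(x)\}$. Let $\lambda_1,\dots,\lambda_N\ge0$, and let $h\ge0$ be a Borel function on $U\setminus\bigcup_jB_j$ such that for all $x\in X$ and $0<r\le R_0$: if $S_r(x)\cap B_j=\emptyset$ for all $j$, then $\int_{S_r(x)}h\ge\frac1r\sum_{j\in J(x,r)}\lambda_j$. Then $$\int_{U\setminus\bigcup_jB_j}h\ge\left(\ln\frac{R_0}{3^{N-1}R}\right)\sum_j\lambda_j.$$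
   Context: $B_r(x)$ is the open ball and $S_r(x)$ the sphere of radius $r$ centered at $x$; integrals over $S_r(x)$ are with respect to surface measure. *)

theory Defs
  imports "HOL-Analysis.Analysis"
begin

text \<open>Surface measure on the sphere S_r(x) in an n-dimensional Euclidean space
(n = DIM('a)), defined as the normalized cone measure: for A \<subseteq> S_r(x),
sigma(A) = (n / r) * Lebesgue measure of the cone {x + t (y - x) : 0 < t \<le> 1, y \<in> A}.\<close>

definition sphere_measure :: "'a::euclidean_space \<Rightarrow> real \<Rightarrow> 'a measure" where
  "sphere_measure x r =
     density
       (distr (restrict_space lborel (ball x r - {x})) (restrict_space borel (sphere x r))
          (\<lambda>y. x + (r / norm (y - x)) *\<^sub>R (y - x)))
       (\<lambda>_. ennreal (real DIM('a) / r))"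

definition sphere_integral :: "('a::euclidean_space \<Rightarrow> real) \<Rightarrow> 'a \<Rightarrow> real \<Rightarrow> ennreal" where
  "sphere_integral h x r = (\<integral>\<^sup>+ y. ennreal (h y) \<partial>sphere_measure x r)"

end

theory Submission
  imports Defs
begin
lemma lborel_scale_nn:
  fixes F :: "'a::euclidean_space \<Rightarrow> ennreal"
  assumes s: "s \<noteq> 0" and F: "F \<in> borel_measurable borel"
  shows "(\<integral>\<^sup>+y. F y \<partial>lborel) = ennreal (\<bar>s\<bar>^DIM('a)) * (\<integral>\<^sup>+z. F (t + s *\<^sub>R z) \<partial>lborel)"
proof -
  have eq: "lborel = density (distr lborel borel (\<lambda>x. t + s *\<^sub>R x)) (\<lambda>_. \<bar>s\<bar>^DIM('a))"
    using lborel_affine[OF s] by blast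
  have "(\<integral>\<^sup>+y. F y \<partial>lborel) = (\<integral>\<^sup>+y. F y \<partial>density (distr lborel borel (\<lambda>x. t + s *\<^sub>R x)) (\<lambda>_. \<bar>s\<bar>^DIM('a)))"
    by (subst eq[symmetric]) (rule refl)
  also have "\<dots> = (\<integral>\<^sup>+y. ennreal (\<bar>s\<bar>^DIM('a)) * F y \<partial>distr lborel borel (\<lambda>x. t + s *\<^sub>R x))"
    using F by (subst nn_integral_density) auto
  also have "\<dots> = (\<integral>\<^sup>+z. ennreal (\<bar>s\<bar>^DIM('a)) * F (t + s *\<^sub>R z) \<partial>lborel)"
    using F by (subst nn_integral_distr) auto
  also have "\<dots> = ennreal (\<bar>s\<bar>^DIM('a)) * (\<integral>\<^sup>+z. F (t + s *\<^sub>R z) \<partial>lborel)"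
    using F by (subst nn_integral_cmult) auto
  finally show ?thesis .
qed

lemma scale_ball_meas:
  fixes S :: "'a::euclidean_space set"
  assumes S: "S \<in> sets borel" and Ssc: "\<And>y t. t > 0 \<Longrightarrow> (t *\<^sub>R y \<in> S) = (y \<in> S)"
    and s: "s \<ge> 0"
  shows "emeasure lborel (S \<inter> cball 0 s) = ennreal (s ^ DIM('a)) * emeasure lborel (S \<inter> ball 0 1)"
proof (cases "s = 0")
  case True
  have "emeasure lborel (S \<inter> cball 0 s) \<le> emeasure lborel {0::'a}"
    using True S by (intro emeasure_mono) auto
  then show ?thesis using True by (simp add: DIM_positive)
next
  case False
  then have sp: "s > 0" using s by auto
  have "emeasure lborel (S \<inter> cball 0 s) = (\<integral>\<^sup>+y. indicator (S \<inter> cball 0 s) y \<partial>lborel)"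
    using S by simp
  also have "\<dots> = ennreal (\<bar>s\<bar>^DIM('a)) * (\<integral>\<^sup>+z. indicator (S \<inter> cball 0 s) (0 + s *\<^sub>R z) \<partial>lborel)"
    using S sp by (intro lborel_scale_nn borel_measurable_indicator) auto
  also have "(\<lambda>z. indicator (S \<inter> cball 0 s) (0 + s *\<^sub>R z) :: ennreal) = indicator (S \<inter> cball 0 1)"
    using sp Ssc[OF sp] by (auto simp: indicator_def mult_le_cancel_left1)
  also have "(\<integral>\<^sup>+z. indicator (S \<inter> cball 0 1) z \<partial>lborel) = emeasure lborel (S \<inter> cball 0 1)"
    using S by simp
  also have "emeasure lborel (S \<inter> cball 0 1) = emeasure lborel (S \<inter> ball 0 1)"
  proof -
    have nul: "sphere (0::'a) 1 \<in> null_sets lborel"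
      using negligible_sphere[of "0::'a" 1] by (auto simp: null_sets_completion_iff negligible_iff_null_sets)
    have "S \<inter> cball 0 1 = (S \<inter> ball 0 1) \<union> (S \<inter> sphere 0 1)" by auto
    then have "emeasure lborel (S \<inter> cball 0 1) = emeasure lborel ((S \<inter> ball 0 1) \<union> (S \<inter> sphere 0 1))" by simp
    also have "\<dots> = emeasure lborel (S \<inter> ball 0 1)"
      by (rule emeasure_Un_null_set) (use S nul in \<open>auto intro: null_sets_subset\<close>)
    finally show ?thesis .
  qed
  finally show ?thesis using sp by simp
qed

lemma ftc_pow:
  fixes a b :: real and n :: nat
  assumes ab: "a \<le> b" and n: "n \<ge> 1"
  shows "(\<integral>\<^sup>+r. indicator {0<..} r * ennreal (real n * r^(n-1)) * indicator {a<..b} r \<partial>lborel)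
       = ennreal (max b 0 ^ n - max a 0 ^ n)"
proof -
  define a' where "a' = max a 0"
  define b' where "b' = max b 0"
  have ab': "a' \<le> b'" "0 \<le> a'" using ab by (auto simp: a'_def b'_def)
  have "(\<integral>\<^sup>+r. indicator {0<..} r * ennreal (real n * r^(n-1)) * indicator {a<..b} r \<partial>lborel)
      = (\<integral>\<^sup>+r. ennreal (real n * r^(n-1)) * indicator {a'..b'} r \<partial>lborel)"
  proof (rule nn_integral_cong_AE)
    show "AE r in lborel. indicator {0<..} r * ennreal (real n * r^(n-1)) * indicator {a<..b} r
        = ennreal (real n * r^(n-1)) * indicator {a'..b'} r"
      using AE_lborel_singleton[of a']
    proof eventually_elim
      case (elim r)
      then show ?case by (auto simp: indicator_def a'_def b'_def max_def)
    qed
  qed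
  also have "\<dots> = ennreal (b' ^ n - a' ^ n)"
  proof (rule nn_integral_FTC_Icc)
    show "(\<lambda>r. real n * r ^ (n - 1)) \<in> borel_measurable borel" by measurable
    show "DERIV (\<lambda>r. r ^ n) x :> real n * x ^ (n - 1)" for x
      by (rule derivative_eq_intros refl | simp)+
    show "0 \<le> real n * x ^ (n - 1)" if "x \<in> {a'..b'}" for x using that ab' by auto
  qed (rule ab')
  finally show ?thesis by (simp add: a'_def b'_def)
qed

lemma norm_Ioc_meas:
  fixes S :: "'a::euclidean_space set"
  assumes S: "S \<in> sets borel" and Ssc: "\<And>y t. t > 0 \<Longrightarrow> (t *\<^sub>R y \<in> S) = (y \<in> S)"
    and ab: "a \<le> b"
  shows "emeasure lborel (S \<inter> {y. a < norm y \<and> norm y \<le> b})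
     = ennreal (max b 0 ^ DIM('a) - max a 0 ^ DIM('a)) * emeasure lborel (S \<inter> ball 0 1)"
proof -
  let ?n = "DIM('a)"
  let ?c = "emeasure lborel (S \<inter> ball 0 1)"
  have cfin: "?c \<noteq> \<infinity>"
  proof -
    have "?c \<le> emeasure lborel (ball (0::'a) 1)" using S by (intro emeasure_mono) auto
    then show ?thesis using emeasure_lborel_ball_finite[of "0::'a" 1] by (auto simp: top_unique less_top)
  qed
  then obtain c' where c': "?c = ennreal c'" "c' \<ge> 0"
    by (metis ennreal_cases ennreal_less_top infinity_ennreal_def less_top top.not_eq_extremum)
  have K: "emeasure lborel (S \<inter> cball 0 s) = ennreal (s ^ ?n) * ?c" if "s \<ge> 0" for s
    using scale_ball_meas[OF S Ssc that] by blast
  consider "a \<ge> 0" | "a < 0" "b \<ge> 0" | "b < 0" using ab by linarith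
  then show ?thesis
  proof cases
    case 1
    have "S \<inter> {y. a < norm y \<and> norm y \<le> b} = S \<inter> cball 0 b - S \<inter> cball 0 a" by auto
    have "emeasure lborel (S \<inter> {y. a < norm y \<and> norm y \<le> b}) =
        emeasure lborel (S \<inter> cball 0 b) - emeasure lborel (S \<inter> cball 0 a)"
      unfolding \<open>S \<inter> {y. a < norm y \<and> norm y \<le> b} = S \<inter> cball 0 b - S \<inter> cball 0 a\<close>
      by (rule emeasure_Diff) (use S ab 1 K[OF 1] cfin in \<open>auto simp: ennreal_mult_eq_top_iff\<close>)
    also have "\<dots> = ennreal (b ^ ?n) * ennreal c' - ennreal (a ^ ?n) * ennreal c'"
      using K 1 ab c' by simp
    also have "\<dots> = ennreal ((b ^ ?n - a ^ ?n) * c')"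
      using 1 ab c' by (simp add: ennreal_mult''[symmetric] ennreal_minus left_diff_distrib)
    finally have eq: "emeasure lborel (S \<inter> {y. a < norm y \<and> norm y \<le> b}) = ennreal ((b ^ ?n - a ^ ?n) * c')" .
    have "max b 0 = b" "max a 0 = a" using 1 ab by auto
    then show ?thesis using eq c' by (simp add: ennreal_mult'')
  next
    case 2
    have "S \<inter> {y. a < norm y \<and> norm y \<le> b} = S \<inter> cball 0 b" using 2
      by auto (meson less_le_trans norm_ge_zero)
    then show ?thesis using K[of b] 2 by (simp add: max_def zero_power[OF DIM_positive])
  next
    case 3
    have "S \<inter> {y. a < norm y \<and> norm y \<le> b} = {}" using 3
      by auto (meson le_less_trans norm_ge_zero not_le)
    then show ?thesis using 3 ab by (simp add: max_def)
  qed
qed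

lemma rect_lemma:
  fixes B :: "'a::euclidean_space set" and A :: "real set"
  assumes B: "B \<in> sets borel" and A: "A \<in> sets borel"
  shows "emeasure lborel {y::'a. norm y \<in> A \<and> sgn y \<in> B} =
     emeasure (density lborel (\<lambda>r. indicator {0<..} r * ennreal (real DIM('a) * r^(DIM('a)-1)))) A
       * emeasure lborel (sgn -` B \<inter> ball 0 1)"
proof -
  let ?n = "DIM('a)"
  define S where "S = sgn -` B"
  have S: "S \<in> sets borel"
    using measurable_sets[OF borel_measurable_sgn B] by (simp add: S_def)
  have Ssc: "(t *\<^sub>R y \<in> S) = (y \<in> S)" if "t > 0" for t y
    using that by (simp add: S_def sgn_scaleR)
  define c where "c = emeasure lborel (S \<inter> ball 0 1)"
  have cfin: "c \<noteq> \<infinity>"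
  proof -
    have "c \<le> emeasure lborel (ball (0::'a) 1)" unfolding c_def using S by (intro emeasure_mono) auto
    then show ?thesis using emeasure_lborel_ball_finite[of "0::'a" 1] by (auto simp: top_unique less_top)
  qed
  define f where "f = (\<lambda>r::real. indicator {0<..} r * ennreal (real ?n * r^(?n-1)))"
  have fm: "f \<in> borel_measurable borel" unfolding f_def by measurable
  define N1 where "N1 = distr (density lborel (indicator S)) (borel::real measure) norm"
  define N2 where "N2 = density lborel (\<lambda>r. f r * c)"
  have N1A: "emeasure N1 X = emeasure lborel (S \<inter> {y. norm y \<in> X})" if X: "X \<in> sets borel" for X
  proof -
    have "emeasure N1 X = emeasure (density lborel (indicator S)) (norm -` X \<inter> space (density lborel (indicator S)))"
      unfolding N1_def using X by (intro emeasure_distr) auto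
    also have "\<dots> = (\<integral>\<^sup>+y. indicator S y * indicator (norm -` X) y \<partial>lborel)"
      using X S measurable_sets[OF borel_measurable_norm X] by (subst emeasure_density) auto
    also have "\<dots> = (\<integral>\<^sup>+y. indicator (S \<inter> {y. norm y \<in> X}) y \<partial>lborel)"
      by (intro nn_integral_cong) (auto simp: indicator_def)
    also have "\<dots> = emeasure lborel (S \<inter> {y. norm y \<in> X})"
      using X S by (intro nn_integral_indicator) auto
    finally show ?thesis .
  qed
  have N2A: "emeasure N2 X = emeasure (density lborel f) X * c" if X: "X \<in> sets borel" for X
  proof -
    have "emeasure N2 X = (\<integral>\<^sup>+r. f r * c * indicator X r \<partial>lborel)"
      unfolding N2_def using X fm by (subst emeasure_density) auto
    also have "\<dots> = (\<integral>\<^sup>+r. (f r * indicator X r) * c \<partial>lborel)"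
      by (intro nn_integral_cong) (simp add: ac_simps)
    also have "\<dots> = (\<integral>\<^sup>+r. f r * indicator X r \<partial>lborel) * c"
      using X fm by (intro nn_integral_multc) auto
    also have "\<dots> = emeasure (density lborel f) X * c"
      using X fm by (subst emeasure_density) auto
    finally show ?thesis .
  qed
  have Ioc: "emeasure N1 {a<..b} = emeasure N2 {a<..b}" for a b
  proof (cases "a \<le> b")
    case True
    have "emeasure N1 {a<..b} = emeasure lborel (S \<inter> {y. a < norm y \<and> norm y \<le> b})"
      by (subst N1A) auto
    also have "\<dots> = ennreal (max b 0 ^ ?n - max a 0 ^ ?n) * c"
      unfolding c_def by (rule norm_Ioc_meas[OF S Ssc True])
    also have "ennreal (max b 0 ^ ?n - max a 0 ^ ?n) = emeasure (density lborel f) {a<..b}"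
    proof -
      have fp: "(\<integral>\<^sup>+r. f r * indicator {a<..b} r \<partial>lborel) = ennreal (max b 0 ^ ?n - max a 0 ^ ?n)"
        unfolding f_def by (rule ftc_pow[OF True]) (simp add: DIM_positive Suc_le_eq)
      show ?thesis using fm fp by (subst emeasure_density) auto
    qed
    also have "\<dots> * c = emeasure N2 {a<..b}"
      by (subst N2A) auto
    finally show ?thesis .
  next
    case False
    then show ?thesis by simp
  qed
  have Sig: "sets (borel :: real measure) = sigma_sets UNIV (range (\<lambda>(a, b). {a<..b::real}))"
    by (subst borel_sigma_sets_Ioc) (simp add: sets_measure_of)
  have "N1 = N2"
  proof (rule measure_eqI_generator_eq[where E="range (\<lambda>(a, b). {a<..b::real})" and \<Omega>=UNIV
        and A="\<lambda>i. {- real i<..real i}"])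
    show "Int_stable (range (\<lambda>(a, b). {a<..b::real}))"
    proof (rule Int_stableI)
      fix X Y assume "X \<in> range (\<lambda>(a, b). {a<..b::real})" "Y \<in> range (\<lambda>(a, b). {a<..b::real})"
      then obtain a b c d where "X = {a<..b}" "Y = {c<..d}" by auto
      then have "X \<inter> Y = {max a c<..min b d}" by auto
      then show "X \<inter> Y \<in> range (\<lambda>(a, b). {a<..b::real})" by auto
    qed
    show "range (\<lambda>(a, b). {a<..b::real}) \<subseteq> Pow UNIV" by auto
    show "emeasure N1 X = emeasure N2 X" if "X \<in> range (\<lambda>(a, b). {a<..b::real})" for X
      using that Ioc by auto
    show "sets N1 = sigma_sets UNIV (range (\<lambda>(a, b). {a<..b::real}))"
      unfolding N1_def using Sig by simp
    show "sets N2 = sigma_sets UNIV (range (\<lambda>(a, b). {a<..b::real}))"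
      unfolding N2_def using Sig by simp
    show "range (\<lambda>i. {- real i<..real i}) \<subseteq> range (\<lambda>(a, b). {a<..b::real})" by auto
    show "(\<Union>i. {- real i<..real i}) = UNIV"
    proof (intro set_eqI iffI)
      fix x :: real
      obtain i :: nat where "\<bar>x\<bar> < real i" using reals_Archimedean2 by blast
      then have "- real i < x \<and> x \<le> real i" by auto
      then show "x \<in> (\<Union>i. {- real i<..real i})" by (intro UN_I[where a=i]) auto
    qed auto
    show "emeasure N1 {- real i<..real i} \<noteq> \<infinity>" for i
    proof -
      have "emeasure N1 {- real i<..real i} = emeasure lborel (S \<inter> {y. - real i < norm y \<and> norm y \<le> real i})"
        by (subst N1A) auto
      also have "\<dots> = ennreal (max (real i) 0 ^ ?n - max (- real i) 0 ^ ?n) * c"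
        unfolding c_def by (rule norm_Ioc_meas[OF S Ssc]) simp_all
      finally have "emeasure N1 {- real i<..real i} = ennreal (max (real i) 0 ^ ?n - max (- real i) 0 ^ ?n) * c" .
      then show ?thesis using cfin by (simp add: ennreal_mult_eq_top_iff)
    qed
  qed
  have "emeasure lborel {y::'a. norm y \<in> A \<and> sgn y \<in> B} = emeasure N1 A"
    using A by (subst N1A) (auto simp: S_def Int_def conj_commute)
  also have "\<dots> = emeasure N2 A" using \<open>N1 = N2\<close> by simp
  also have "\<dots> = emeasure (density lborel f) A * c" using A by (rule N2A)
  finally show ?thesis by (simp add: f_def c_def S_def Int_commute)
qed

lemma norm_sgn_scale: "norm y *\<^sub>R sgn y = (y::'a::real_normed_vector)"
  by (cases "y = 0") (simp_all add: sgn_div_norm)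

lemma polar:
  fixes g :: "'a::euclidean_space \<Rightarrow> ennreal"
  assumes g[measurable]: "g \<in> borel_measurable borel"
  shows "(\<integral>\<^sup>+y. g y \<partial>lborel) = (\<integral>\<^sup>+z. indicator (ball 0 1) z *
      (\<integral>\<^sup>+r. (indicator {0<..} r * ennreal (real DIM('a) * r^(DIM('a)-1))) * g (r *\<^sub>R sgn z) \<partial>lborel) \<partial>lborel)"
proof -
  define f where "f = (\<lambda>r::real. indicator {0<..} r * ennreal (real DIM('a) * r^(DIM('a)-1)))"
  have fm[measurable]: "f \<in> borel_measurable borel" unfolding f_def by measurable
  define M1 where "M1 = density lborel f"
  define M2 where "M2 = distr (density lborel (indicator (ball (0::'a) 1))) borel sgn"
  define M where "M = distr lborel (borel \<Otimes>\<^sub>M borel) (\<lambda>y::'a. (norm y, sgn y))"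
  have sM1: "sets M1 = sets borel" unfolding M1_def by simp
  have sM2: "sets M2 = sets borel" unfolding M2_def by simp
  have sf1: "sigma_finite_measure M1"
    unfolding M1_def by (subst sigma_finite_measure.sigma_finite_iff_density_finite[OF sigma_finite_lborel]) (auto simp: f_def indicator_def)
  have M2B: "emeasure M2 B = emeasure lborel (sgn -` B \<inter> ball 0 1)" if B: "B \<in> sets borel" for B
  proof -
    have sB: "sgn -` B \<in> sets (borel :: 'a measure)"
      using measurable_sets[OF borel_measurable_sgn B] by simp
    have "emeasure M2 B = emeasure (density lborel (indicator (ball (0::'a) 1))) (sgn -` B \<inter> space (density lborel (indicator (ball (0::'a) 1))))"
      unfolding M2_def using B by (intro emeasure_distr) auto
    also have "\<dots> = (\<integral>\<^sup>+y. indicator (ball 0 1) y * indicator (sgn -` B) y \<partial>lborel)"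
      using sB by (subst emeasure_density) (auto intro!: borel_measurable_indicator)
    also have "\<dots> = (\<integral>\<^sup>+y. indicator (sgn -` B \<inter> ball 0 1) y \<partial>lborel)"
      by (intro nn_integral_cong) (auto simp: indicator_def)
    also have "\<dots> = emeasure lborel (sgn -` B \<inter> ball 0 1)"
      using sB by (intro nn_integral_indicator) auto
    finally show ?thesis .
  qed
  have sf2: "sigma_finite_measure M2"
  proof -
    have "emeasure M2 (space M2) \<le> emeasure lborel (ball (0::'a) 1)"
      using M2B[of UNIV] by (simp add: M2_def emeasure_mono)
    then have "emeasure M2 (space M2) \<noteq> \<infinity>"
      using emeasure_lborel_ball_finite[of "0::'a" 1] by (auto simp: top_unique less_top)
    then interpret finite_measure M2 by (rule finite_measureI)
    show ?thesis by unfold_locales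
  qed
  have eq: "M1 \<Otimes>\<^sub>M M2 = M"
  proof (rule pair_measure_eqI[OF sf1 sf2])
    show "sets (M1 \<Otimes>\<^sub>M M2) = sets M"
      unfolding M_def using sM1 sM2 by (simp cong: sets_pair_measure_cong)
    fix A B assume A: "A \<in> sets M1" and B: "B \<in> sets M2"
    then have A': "A \<in> sets borel" and B': "B \<in> sets borel" using sM1 sM2 by auto
    have "emeasure M (A \<times> B) = emeasure lborel ((\<lambda>y::'a. (norm y, sgn y)) -` (A \<times> B) \<inter> space lborel)"
      unfolding M_def using A' B' by (intro emeasure_distr) auto
    also have "\<dots> = emeasure lborel {y::'a. norm y \<in> A \<and> sgn y \<in> B}"
      by (simp add: vimage_def)
    also have "\<dots> = emeasure M1 A * emeasure M2 B"
      unfolding M1_def f_def using rect_lemma[OF B' A'] M2B[OF B'] by simp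
    finally show "emeasure M1 A * emeasure M2 B = emeasure M (A \<times> B)" by simp
  qed
  interpret P: pair_sigma_finite M1 M2 using sf1 sf2 by (simp add: pair_sigma_finite_def)
  have gm2: "(\<lambda>p::real \<times> 'a. g (fst p *\<^sub>R snd p)) \<in> borel_measurable (M1 \<Otimes>\<^sub>M M2)"
  proof -
    have "(\<lambda>p::real \<times> 'a. g (fst p *\<^sub>R snd p)) \<in> borel_measurable (borel \<Otimes>\<^sub>M borel)" by measurable
    then show ?thesis using sM1 sM2 by (simp cong: measurable_cong_sets sets_pair_measure_cong)
  qed
  have "(\<integral>\<^sup>+y. g y \<partial>lborel) = (\<integral>\<^sup>+y. g (fst (norm y, sgn y) *\<^sub>R snd (norm y, sgn y)) \<partial>lborel)"
    by (simp add: norm_sgn_scale)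
  also have "\<dots> = (\<integral>\<^sup>+p. g (fst p *\<^sub>R snd p) \<partial>M)"
    unfolding M_def by (rule nn_integral_distr[symmetric]) auto
  also have "\<dots> = (\<integral>\<^sup>+p. g (fst p *\<^sub>R snd p) \<partial>(M1 \<Otimes>\<^sub>M M2))" by (simp add: eq)
  also have "\<dots> = (\<integral>\<^sup>+u. (\<integral>\<^sup>+r. g (r *\<^sub>R u) \<partial>M1) \<partial>M2)"
    using P.nn_integral_snd[OF gm2] by simp
  also have "\<dots> = (\<integral>\<^sup>+z. (\<integral>\<^sup>+r. g (r *\<^sub>R sgn z) \<partial>M1) \<partial>density lborel (indicator (ball (0::'a) 1)))"
  proof -
    have "(\<lambda>u. \<integral>\<^sup>+r. g (r *\<^sub>R u) \<partial>M1) \<in> borel_measurable (borel :: 'a measure)"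
    proof (rule P.M1.borel_measurable_nn_integral)
      have "(\<lambda>p::'a \<times> real. g (snd p *\<^sub>R fst p)) \<in> borel_measurable (borel \<Otimes>\<^sub>M borel)" by measurable
      then show "(\<lambda>(u, r). g (r *\<^sub>R u)) \<in> borel_measurable (borel \<Otimes>\<^sub>M M1)"
        using sM1 by (simp add: case_prod_beta' cong: measurable_cong_sets sets_pair_measure_cong)
    qed
    then show ?thesis unfolding M2_def by (intro nn_integral_distr) auto
  qed
  also have "\<dots> = (\<integral>\<^sup>+z. indicator (ball 0 1) z * (\<integral>\<^sup>+r. f r * g (r *\<^sub>R sgn z) \<partial>lborel) \<partial>lborel)"
  proof -
    have m: "(\<lambda>z. \<integral>\<^sup>+r. g (r *\<^sub>R sgn z) \<partial>M1) \<in> borel_measurable (borel :: 'a measure)"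
    proof (rule P.M1.borel_measurable_nn_integral)
      have "(\<lambda>p::'a \<times> real. g (snd p *\<^sub>R sgn (fst p))) \<in> borel_measurable (borel \<Otimes>\<^sub>M borel)" by measurable
      then show "(\<lambda>(u, r). g (r *\<^sub>R sgn u)) \<in> borel_measurable (borel \<Otimes>\<^sub>M M1)"
        using sM1 by (simp add: case_prod_beta' cong: measurable_cong_sets sets_pair_measure_cong)
    qed
    show ?thesis
      using m by (subst nn_integral_density) (auto simp: M1_def nn_integral_density intro!: borel_measurable_indicator)
  qed
  finally show ?thesis by (simp add: f_def)
qed

lemma sphere_int_formula:
  fixes g :: "'a::euclidean_space \<Rightarrow> ennreal" and c :: 'a
  assumes g[measurable]: "g \<in> borel_measurable borel" and r: "0 < r"
  shows "(\<integral>\<^sup>+y. g y \<partial>sphere_measure c r) =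
    (\<integral>\<^sup>+z. indicator (ball 0 1) z * (ennreal (real DIM('a) * r^(DIM('a)-1)) * g (c + r *\<^sub>R sgn z)) \<partial>lborel)"
proof -
  let ?n = "DIM('a)"
  define P where "P = (\<lambda>y::'a. c + (r / norm (y - c)) *\<^sub>R (y - c))"
  define \<Omega> where "\<Omega> = ball c r - {c}"
  define k where "k = ennreal (real ?n / r)"
  have \<Omega>s: "\<Omega> \<in> sets lborel" unfolding \<Omega>_def by auto
  have Pm: "P \<in> measurable (restrict_space lborel \<Omega>) (restrict_space borel (sphere c r))"
  proof (rule measurable_restrict_space2)
    show "P \<in> space (restrict_space lborel \<Omega>) \<rightarrow> sphere c r"
      using r by (auto simp: P_def \<Omega>_def space_restrict_space dist_norm norm_minus_commute)
    have "P \<in> borel_measurable borel" unfolding P_def by measurable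
    then show "P \<in> measurable (restrict_space lborel \<Omega>) borel"
      by (intro measurable_restrict_space1) simp
  qed
  have gS: "g \<in> borel_measurable (restrict_space borel (sphere c r))"
    by (intro measurable_restrict_space1) simp
  have "(\<integral>\<^sup>+y. g y \<partial>sphere_measure c r) =
      (\<integral>\<^sup>+y. k * g y \<partial>distr (restrict_space lborel \<Omega>) (restrict_space borel (sphere c r)) P)"
    unfolding sphere_measure_def P_def[symmetric] \<Omega>_def[symmetric] k_def
    using gS by (subst nn_integral_density) auto
  also have "\<dots> = (\<integral>\<^sup>+y. k * g (P y) \<partial>restrict_space lborel \<Omega>)"
    using gS Pm by (subst nn_integral_distr) auto
  also have "\<dots> = (\<integral>\<^sup>+y. k * g (P y) * indicator \<Omega> y \<partial>lborel)"
    using \<Omega>s by (subst nn_integral_restrict_space) auto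
  also have "\<dots> = ennreal (\<bar>r\<bar>^?n) * (\<integral>\<^sup>+z. k * g (P (c + r *\<^sub>R z)) * indicator \<Omega> (c + r *\<^sub>R z) \<partial>lborel)"
    using r \<Omega>s unfolding P_def by (intro lborel_scale_nn) auto
  also have "\<dots> = (\<integral>\<^sup>+z. ennreal (\<bar>r\<bar>^?n) * (k * g (P (c + r *\<^sub>R z)) * indicator \<Omega> (c + r *\<^sub>R z)) \<partial>lborel)"
    using r \<Omega>s unfolding P_def by (intro nn_integral_cmult[symmetric]) auto
  also have "\<dots> = (\<integral>\<^sup>+z. indicator (ball 0 1) z * (ennreal (real ?n * r^(?n-1)) * g (c + r *\<^sub>R sgn z)) \<partial>lborel)"
  proof (rule nn_integral_cong_AE)
    show "AE z in lborel. ennreal (\<bar>r\<bar>^?n) * (k * g (P (c + r *\<^sub>R z)) * indicator \<Omega> (c + r *\<^sub>R z)) =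
        indicator (ball 0 1) z * (ennreal (real ?n * r^(?n-1)) * g (c + r *\<^sub>R sgn z))"
      using AE_lborel_singleton[of "0::'a"]
    proof eventually_elim
      case (elim z)
      have Pz: "P (c + r *\<^sub>R z) = c + r *\<^sub>R sgn z"
        using r elim by (simp add: P_def sgn_div_norm field_simps)
      have iz: "indicator \<Omega> (c + r *\<^sub>R z) = (indicator (ball 0 1) z :: ennreal)"
        using r elim by (auto simp: \<Omega>_def indicator_def dist_norm)
      obtain m where m: "?n = Suc m" using DIM_positive not0_implies_Suc by blast
      have rr: "\<bar>r\<bar>^?n * (real ?n / r) = real ?n * r^(?n-1)"
        unfolding m using r by (simp add: field_simps)
      have kk: "ennreal (\<bar>r\<bar>^?n) * k = ennreal (real ?n * r^(?n-1))"
        unfolding k_def rr[symmetric] using r by (subst ennreal_mult) auto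
      show ?case unfolding Pz iz kk[symmetric] by (simp only: mult_ac)
    qed
  qed
  finally show ?thesis .
qed

lemma annulus_formula:
  fixes g :: "'a::euclidean_space \<Rightarrow> ennreal" and c :: 'a
  assumes g[measurable]: "g \<in> borel_measurable borel" and a: "0 < a"
  shows "(\<integral>\<^sup>+y. g y * indicator {y. a < dist c y \<and> dist c y < b} y \<partial>lborel) =
    (\<integral>\<^sup>+r. indicator {a<..<b} r * (\<integral>\<^sup>+y. g y \<partial>sphere_measure c r) \<partial>lborel)"
proof -
  let ?n = "DIM('a)"
  define A where "A = {y. a < dist c y \<and> dist c y < b}"
  have As[measurable]: "A \<in> sets borel" unfolding A_def by measurable
  define G where "G = (\<lambda>w. g (c + w) * indicator A (c + w))"
  have Gm[measurable]: "G \<in> borel_measurable borel" unfolding G_def by measurable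
  define F where "F = (\<lambda>r z. indicator {a<..<b} r * (indicator (ball 0 1) z *
       (ennreal (real ?n * r^(?n-1)) * g (c + r *\<^sub>R sgn z))) :: ennreal)"
  have Fm: "(\<lambda>(r, z). F r z) \<in> borel_measurable (lborel \<Otimes>\<^sub>M lborel)"
  proof -
    have [measurable]: "ball (0::'a) 1 \<in> sets borel" by simp
    have [measurable]: "(\<lambda>p::real \<times> 'a. g (c + fst p *\<^sub>R sgn (snd p))) \<in> borel_measurable (borel \<Otimes>\<^sub>M borel)"
      by measurable
    have "(\<lambda>p::real \<times> 'a. F (fst p) (snd p)) \<in> borel_measurable (borel \<Otimes>\<^sub>M borel)"
      unfolding F_def by measurable
    then show ?thesis by (simp add: case_prod_beta' cong: measurable_cong_sets sets_pair_measure_cong)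
  qed
  have "(\<integral>\<^sup>+y. g y * indicator A y \<partial>lborel) = ennreal (\<bar>1\<bar>^?n) * (\<integral>\<^sup>+w. g (c + 1 *\<^sub>R w) * indicator A (c + 1 *\<^sub>R w) \<partial>lborel)"
    by (rule lborel_scale_nn) auto
  also have "\<dots> = (\<integral>\<^sup>+w. G w \<partial>lborel)" by (simp add: G_def)
  also have "\<dots> = (\<integral>\<^sup>+z. indicator (ball 0 1) z *
      (\<integral>\<^sup>+r. (indicator {0<..} r * ennreal (real ?n * r^(?n-1))) * G (r *\<^sub>R sgn z) \<partial>lborel) \<partial>lborel)"
    by (rule polar[OF Gm])
  also have "\<dots> = (\<integral>\<^sup>+z. (\<integral>\<^sup>+r. F r z \<partial>lborel) \<partial>lborel)"
  proof (rule nn_integral_cong_AE)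
    show "AE z in lborel. indicator (ball 0 1) z *
      (\<integral>\<^sup>+r. (indicator {0<..} r * ennreal (real ?n * r^(?n-1))) * G (r *\<^sub>R sgn z) \<partial>lborel) =
      (\<integral>\<^sup>+r. F r z \<partial>lborel)"
      using AE_lborel_singleton[of "0::'a"]
    proof eventually_elim
      case (elim z)
      show ?case
      proof (cases "z \<in> ball 0 1")
        case False
        then show ?thesis by (simp add: F_def)
      next
        case True
        have "(\<integral>\<^sup>+r. (indicator {0<..} r * ennreal (real ?n * r^(?n-1))) * G (r *\<^sub>R sgn z) \<partial>lborel) =
            (\<integral>\<^sup>+r. F r z \<partial>lborel)"
        proof (rule nn_integral_cong)
          fix r :: real
          show "(indicator {0<..} r * ennreal (real ?n * r^(?n-1))) * G (r *\<^sub>R sgn z) = F r z"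
          proof (cases "r > 0")
            case False
            then show ?thesis using a by (simp add: F_def indicator_def)
          next
            case rp: True
            have "dist c (c + r *\<^sub>R sgn z) = r"
              using rp elim by (simp add: dist_norm norm_sgn)
            then have "indicator A (c + r *\<^sub>R sgn z) = (indicator {a<..<b} r :: ennreal)"
              by (simp add: A_def indicator_def)
            then show ?thesis using rp True by (simp add: F_def G_def mult_ac)
          qed
        qed
        then show ?thesis using True by simp
      qed
    qed
  qed
  also have "\<dots> = (\<integral>\<^sup>+r. (\<integral>\<^sup>+z. F r z \<partial>lborel) \<partial>lborel)"
    using lborel_pair.Fubini'[OF Fm] by simp
  also have "\<dots> = (\<integral>\<^sup>+r. indicator {a<..<b} r * (\<integral>\<^sup>+y. g y \<partial>sphere_measure c r) \<partial>lborel)"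
  proof (rule nn_integral_cong)
    fix r :: real
    show "(\<integral>\<^sup>+z. F r z \<partial>lborel) = indicator {a<..<b} r * (\<integral>\<^sup>+y. g y \<partial>sphere_measure c r)"
    proof (cases "r \<in> {a<..<b}")
      case False
      then show ?thesis by (simp add: F_def)
    next
      case True
      then have rp: "r > 0" using a by auto
      have "(\<integral>\<^sup>+z. F r z \<partial>lborel) = (\<integral>\<^sup>+z. indicator (ball 0 1) z *
       (ennreal (real ?n * r^(?n-1)) * g (c + r *\<^sub>R sgn z)) \<partial>lborel)"
        using True by (simp add: F_def)
      also have "\<dots> = (\<integral>\<^sup>+y. g y \<partial>sphere_measure c r)"
        by (rule sphere_int_formula[OF g rp, symmetric])
      finally show ?thesis using True by simp
    qed
  qed
  finally show ?thesis by (simp add: A_def)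
qed

lemma ln_integral:
  fixes a b L :: real
  assumes a: "0 < a" and ab: "a \<le> b" and L: "0 \<le> L"
  shows "(\<integral>\<^sup>+r. indicator {a<..<b} r * ennreal (L / r) \<partial>lborel) = ennreal (L * ln (b / a))"
proof -
  have "(\<integral>\<^sup>+r. indicator {a<..<b} r * ennreal (L / r) \<partial>lborel) =
      (\<integral>\<^sup>+r. ennreal (L / r) * indicator {a..b} r \<partial>lborel)"
  proof (rule nn_integral_cong_AE)
    show "AE r in lborel. indicator {a<..<b} r * ennreal (L / r) = ennreal (L / r) * indicator {a..b} r"
      using AE_lborel_singleton[of a] AE_lborel_singleton[of b]
    proof eventually_elim
      case (elim r) then show ?case by (auto simp: indicator_def)
    qed
  qed
  also have "\<dots> = ennreal (L * ln b - L * ln a)"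
  proof (rule nn_integral_FTC_Icc)
    show "(\<lambda>r. L / r) \<in> borel_measurable borel" by measurable
    show "DERIV (\<lambda>r. L * ln r) x :> L / x" if "x \<in> {a..b}" for x
      using that a by (auto intro!: derivative_eq_intros simp: field_simps)
    show "0 \<le> L / x" if "x \<in> {a..b}" for x using that a L by auto
  qed (rule ab)
  also have "L * ln b - L * ln a = L * ln (b / a)"
    using a ab by (simp add: ln_div right_diff_distrib)
  finally show ?thesis .
qed

lemma space_sphere_measure: "space (sphere_measure c r) = sphere c r"
  by (simp add: sphere_measure_def)

lemma ennreal_plus_le:
  assumes x: "0 \<le> x" shows "ennreal (x + y) \<le> ennreal x + ennreal y"
proof (cases "y \<ge> 0")
  case True
  then show ?thesis using x by (simp add: ennreal_plus)
next
  case False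
  then have "ennreal (x + y) \<le> ennreal x" by (intro ennreal_leI) simp
  also have "\<dots> \<le> ennreal x + ennreal y" by simp
  finally show ?thesis .
qed

definition cfg :: "'a::euclidean_space set \<Rightarrow> real \<Rightarrow> nat \<Rightarrow> (nat \<Rightarrow> 'a) \<Rightarrow> nat set \<Rightarrow> (nat \<Rightarrow> 'a) \<Rightarrow> (nat \<Rightarrow> real) \<Rightarrow> (nat \<Rightarrow> nat set) \<Rightarrow> bool" where
  "cfg X R N xs I cc \<rho> G \<longleftrightarrow> finite I \<and> I \<noteq> {} \<and>
     (\<forall>i\<in>I. cc i \<in> X \<and> 0 < \<rho> i \<and> G i \<subseteq> {1..N} \<and> (\<forall>j\<in>G i. cball (xs j) R \<subseteq> cball (cc i) (\<rho> i))) \<and>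
     (\<forall>i\<in>I. \<forall>i'\<in>I. i \<noteq> i' \<longrightarrow> G i \<inter> G i' = {}) \<and> (\<Union>i\<in>I. G i) = {1..N}"


context
  fixes X :: "'a::euclidean_space set" and R0 R :: real and N :: nat
    and xs :: "nat \<Rightarrow> 'a" and lam :: "nat \<Rightarrow> real" and h :: "'a \<Rightarrow> real"
  assumes R0: "R0 > 0"
    and lam: "\<And>j. j \<in> {1..N} \<Longrightarrow> lam j \<ge> 0"
    and h_meas: "h \<in> borel_measurable
        (restrict_space borel ({y. infdist y X \<le> R0} - (\<Union>j\<in>{1..N}. cball (xs j) R)))"
    and h_sphere: "\<And>x r. x \<in> X \<Longrightarrow> 0 < r \<Longrightarrow> r \<le> R0 \<Longrightarrow>
        (\<forall>j\<in>{1..N}. sphere x r \<inter> cball (xs j) R = {}) \<Longrightarrow>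
        sphere_integral h x r \<ge>
          ennreal ((1 / r) * (\<Sum>j\<in>{j\<in>{1..N}. cball (xs j) R \<subseteq> ball x r}. lam j))"
begin

abbreviation "DD \<equiv> {y. infdist y X \<le> R0} - (\<Union>j\<in>{1..N}. cball (xs j) R)"
abbreviation "HH \<equiv> (\<lambda>y. ennreal (h y) * indicator DD y)"
abbreviation "FH V \<equiv> (\<integral>\<^sup>+ y. HH y * indicator V y \<partial>lborel)"

lemma DD_borel: "DD \<in> sets borel"
proof -
  have "closed {y. infdist y X \<le> R0}" by (intro closed_Collect_le continuous_intros)
  moreover have "closed (\<Union>j\<in>{1..N}. cball (xs j) R)" by (intro closed_UN) auto
  ultimately show ?thesis by auto
qed

lemma HH_meas: "HH \<in> borel_measurable borel"
proof -
  have "(\<lambda>x. indicator DD x *\<^sub>R h x) \<in> borel_measurable borel"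
    using h_meas DD_borel by (subst (asm) borel_measurable_restrict_space_iff) auto
  then have "(\<lambda>x. ennreal (indicator DD x *\<^sub>R h x)) \<in> borel_measurable borel" by measurable
  moreover have "(\<lambda>x. ennreal (indicator DD x *\<^sub>R h x)) = HH"
    by (auto simp: indicator_def fun_eq_iff)
  ultimately show ?thesis by simp
qed

lemma FH_mono: "V \<subseteq> V' \<Longrightarrow> FH V \<le> FH V'"
  by (intro nn_integral_mono mult_left_mono) (auto simp: indicator_def)

lemma ann_bound:
  assumes c: "c \<in> X" and a: "0 < a" "a \<le> b" "b \<le> R0" and L: "0 \<le> L"
    and disj: "\<And>r j. r \<in> {a<..<b} \<Longrightarrow> j \<in> {1..N} \<Longrightarrow> sphere c r \<inter> cball (xs j) R = {}"
    and Lle: "\<And>r. r \<in> {a<..<b} \<Longrightarrow> L \<le> (\<Sum>j\<in>{j\<in>{1..N}. cball (xs j) R \<subseteq> ball c r}. lam j)"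
  shows "FH {y. a < dist c y \<and> dist c y < b} \<ge> ennreal (L * ln (b / a))"
proof -
  have "FH {y. a < dist c y \<and> dist c y < b} =
      (\<integral>\<^sup>+r. indicator {a<..<b} r * (\<integral>\<^sup>+y. HH y \<partial>sphere_measure c r) \<partial>lborel)"
    by (rule annulus_formula[OF HH_meas a(1)])
  also have "\<dots> \<ge> (\<integral>\<^sup>+r. indicator {a<..<b} r * ennreal (L / r) \<partial>lborel)"
  proof (rule nn_integral_mono)
    fix r :: real
    show "indicator {a<..<b} r * ennreal (L / r) \<le> indicator {a<..<b} r * (\<integral>\<^sup>+y. HH y \<partial>sphere_measure c r)"
    proof (cases "r \<in> {a<..<b}")
      case False then show ?thesis by simp
    next
      case True
      then have r: "0 < r" "r \<le> R0" using a by auto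
      have dj: "\<forall>j\<in>{1..N}. sphere c r \<inter> cball (xs j) R = {}" using disj[OF True] by blast
      have e1: "(\<integral>\<^sup>+y. HH y \<partial>sphere_measure c r) = sphere_integral h c r"
        unfolding sphere_integral_def
      proof (rule nn_integral_cong)
        fix y assume "y \<in> space (sphere_measure c r)"
        then have y: "y \<in> sphere c r" by (simp add: space_sphere_measure)
        have "infdist y X \<le> dist y c" by (rule infdist_le[OF c])
        also have "dist y c = r" using y by (simp add: dist_commute)
        finally have "infdist y X \<le> R0" using r by simp
        moreover have "y \<notin> (\<Union>j\<in>{1..N}. cball (xs j) R)" using dj y by blast
        ultimately show "HH y = ennreal (h y)" by simp
      qed
      have e2: "sphere_integral h c r \<ge> ennreal ((1 / r) * (\<Sum>j\<in>{j\<in>{1..N}. cball (xs j) R \<subseteq> ball c r}. lam j))"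
        by (rule h_sphere[OF c r dj])
      have e3: "(1 / r) * (\<Sum>j\<in>{j\<in>{1..N}. cball (xs j) R \<subseteq> ball c r}. lam j) \<ge> L / r"
        using Lle[OF True] r by (simp add: divide_right_mono)
      have "ennreal (L / r) \<le> (\<integral>\<^sup>+y. HH y \<partial>sphere_measure c r)"
        unfolding e1 using ennreal_leI[OF e3] e2 by (rule order_trans)
      then show ?thesis using True by simp
    qed
  qed
  also have "(\<integral>\<^sup>+r. indicator {a<..<b} r * ennreal (L / r) \<partial>lborel) = ennreal (L * ln (b / a))"
    by (rule ln_integral[OF a(1,2) L])
  finally show ?thesis .
qed

lemma FH_disj_sum:
  assumes fin: "finite I" and Am: "\<And>i. i \<in> I \<Longrightarrow> A i \<in> sets borel" and Wm: "W \<in> sets borel"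
    and disj: "\<And>i i'. i \<in> I \<Longrightarrow> i' \<in> I \<Longrightarrow> i \<noteq> i' \<Longrightarrow> A i \<inter> A i' = {}"
    and WA: "\<And>i. i \<in> I \<Longrightarrow> W \<inter> A i = {}"
    and sub: "W \<union> (\<Union>i\<in>I. A i) \<subseteq> V"
  shows "FH W + (\<Sum>i\<in>I. FH (A i)) \<le> FH V"
proof -
  have HHm[measurable]: "HH \<in> borel_measurable borel" by (rule HH_meas)
  have HHi: "(\<lambda>y. HH y * indicator S y) \<in> borel_measurable lborel" if "S \<in> sets borel" for S
    using borel_measurable_times_ennreal[OF HH_meas borel_measurable_indicator[OF that]] by simp
  have df: "disjoint_family_on A I" using disj by (auto simp: disjoint_family_on_def)
  have "(\<Sum>i\<in>I. FH (A i)) = (\<integral>\<^sup>+y. (\<Sum>i\<in>I. HH y * indicator (A i) y) \<partial>lborel)"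
    by (rule nn_integral_sum[symmetric]) (rule HHi[OF Am], assumption)
  then have "FH W + (\<Sum>i\<in>I. FH (A i)) = FH W + (\<integral>\<^sup>+y. (\<Sum>i\<in>I. HH y * indicator (A i) y) \<partial>lborel)"
    by simp
  also have "\<dots> = (\<integral>\<^sup>+y. HH y * indicator W y + (\<Sum>i\<in>I. HH y * indicator (A i) y) \<partial>lborel)"
    by (rule nn_integral_add[symmetric]) (rule HHi[OF Wm], rule borel_measurable_sum, rule HHi[OF Am], assumption)
  also have "\<dots> \<le> FH V"
  proof (rule nn_integral_mono)
    fix y
    have "(\<Sum>i\<in>I. HH y * indicator (A i) y) = HH y * (\<Sum>i\<in>I. indicator (A i) y)"
      by (simp add: sum_distrib_left)
    also have "(\<Sum>i\<in>I. indicator (A i) y) = (indicator (\<Union>(A ` I)) y :: ennreal)"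
      by (rule indicator_UN_disjoint[OF fin df, symmetric])
    finally have e: "(\<Sum>i\<in>I. HH y * indicator (A i) y) = HH y * indicator (\<Union>(A ` I)) y" .
    have "indicator W y + indicator (\<Union>(A ` I)) y \<le> (indicator V y :: ennreal)"
      using WA sub by (auto simp: indicator_def)
    then have "HH y * (indicator W y + indicator (\<Union>(A ` I)) y) \<le> HH y * indicator V y"
      by (rule mult_left_mono) simp
    then show "HH y * indicator W y + (\<Sum>i\<in>I. HH y * indicator (A i) y) \<le> HH y * indicator V y"
      unfolding e by (simp add: distrib_left)
  qed
  finally show ?thesis .
qed

abbreviation "cfgc \<equiv> cfg X R N xs"

lemma cfg_sum:
  assumes "cfgc I cc \<rho> G"
  shows "(\<Sum>i\<in>I. sum lam (G i)) = (\<Sum>j\<in>{1..N}. lam j)"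
proof -
  have fin: "finite I" "\<forall>i\<in>I. finite (G i)" using assms unfolding cfg_def by (auto intro: finite_subset)
  have "(\<Sum>j\<in>{1..N}. lam j) = sum lam (\<Union>i\<in>I. G i)" using assms unfolding cfg_def by simp
  also have "\<dots> = (\<Sum>i\<in>I. sum lam (G i))"
    using fin assms unfolding cfg_def by (intro sum.UNION_disjoint) auto
  finally show ?thesis by simp
qed

lemma growth:
  assumes cfg: "cfgc I cc \<rho> G" and t1: "1 \<le> t" and tR: "\<And>i. i \<in> I \<Longrightarrow> t * \<rho> i \<le> R0"
    and sep: "\<And>i i'. i \<in> I \<Longrightarrow> i' \<in> I \<Longrightarrow> i \<noteq> i' \<Longrightarrow> t * (\<rho> i + \<rho> i') \<le> dist (cc i) (cc i')"
  shows "FH (UNIV - (\<Union>i\<in>I. cball (cc i) (t * \<rho> i))) + ennreal ((\<Sum>j\<in>{1..N}. lam j) * ln t)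
      \<le> FH (UNIV - (\<Union>i\<in>I. cball (cc i) (\<rho> i)))"
proof -
  have fin: "finite I" and I: "\<And>i. i \<in> I \<Longrightarrow> cc i \<in> X \<and> 0 < \<rho> i \<and> G i \<subseteq> {1..N} \<and>
      (\<forall>j\<in>G i. cball (xs j) R \<subseteq> cball (cc i) (\<rho> i))"
    and cover: "(\<Union>i\<in>I. G i) = {1..N}"
    using cfg unfolding cfg_def by auto
  define A where "A = (\<lambda>i. {y. \<rho> i < dist (cc i) y \<and> dist (cc i) y < t * \<rho> i})"
  define W where "W = UNIV - (\<Union>i\<in>I. cball (cc i) (t * \<rho> i))"
  have Am: "A i \<in> sets borel" for i unfolding A_def by measurable
  have Wm: "W \<in> sets borel" unfolding W_def using fin by (intro sets.Diff sets.finite_UN) auto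
  have disj: "A i \<inter> A i' = {}" if "i \<in> I" "i' \<in> I" "i \<noteq> i'" for i i'
  proof (rule ccontr)
    assume "A i \<inter> A i' \<noteq> {}"
    then obtain y where "dist (cc i) y < t * \<rho> i" "dist (cc i') y < t * \<rho> i'" by (auto simp: A_def)
    then have "dist (cc i) (cc i') < t * (\<rho> i + \<rho> i')"
      using dist_triangle3[of "cc i" "cc i'" y] by (simp add: distrib_left dist_commute)
    then show False using sep[OF that] by simp
  qed
  have WA: "W \<inter> A i = {}" if "i \<in> I" for i
    using that by (auto simp: W_def A_def)
  have sub: "W \<union> (\<Union>i\<in>I. A i) \<subseteq> UNIV - (\<Union>i\<in>I. cball (cc i) (\<rho> i))"
  proof -
    have "W \<subseteq> UNIV - (\<Union>i\<in>I. cball (cc i) (\<rho> i))"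
    proof -
      have "cball (cc i) (\<rho> i) \<subseteq> cball (cc i) (t * \<rho> i)" if "i \<in> I" for i
        using I[OF that] t1 by (intro subset_cball) (simp add: mult_le_cancel_right1)
      then show ?thesis unfolding W_def by blast
    qed
    moreover have "A i \<inter> cball (cc i') (\<rho> i') = {}" if "i \<in> I" "i' \<in> I" for i i'
    proof (cases "i = i'")
      case True then show ?thesis by (auto simp: A_def)
    next
      case False
      show ?thesis
      proof (rule ccontr)
        assume "A i \<inter> cball (cc i') (\<rho> i') \<noteq> {}"
        then obtain y where "dist (cc i) y < t * \<rho> i" "dist (cc i') y \<le> \<rho> i'" by (auto simp: A_def)
        moreover have "\<rho> i' \<le> t * \<rho> i'" using I[OF that(2)] t1 by (simp add: mult_le_cancel_right1)
        ultimately have "dist (cc i) (cc i') < t * (\<rho> i + \<rho> i')"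
          using dist_triangle3[of "cc i" "cc i'" y] by (simp add: distrib_left dist_commute)
        then show False using sep[OF that False] by simp
      qed
    qed
    ultimately show ?thesis by blast
  qed
  have Abound: "ennreal (sum lam (G i) * ln t) \<le> FH (A i)" if i: "i \<in> I" for i
  proof -
    note Ii = I[OF i]
    have "ennreal (sum lam (G i) * ln (t * \<rho> i / \<rho> i)) \<le> FH (A i)"
      unfolding A_def
    proof (rule ann_bound)
      show "cc i \<in> X" "0 < \<rho> i" using Ii by auto
      show "\<rho> i \<le> t * \<rho> i" using Ii t1 by (simp add: mult_le_cancel_right1)
      show "t * \<rho> i \<le> R0" by (rule tR[OF i])
      show "0 \<le> sum lam (G i)" using Ii lam by (intro sum_nonneg) auto
      show "sphere (cc i) r \<inter> cball (xs j) R = {}" if r: "r \<in> {\<rho> i<..<t * \<rho> i}" and j: "j \<in> {1..N}" for r j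
      proof -
        obtain i' where i': "i' \<in> I" "j \<in> G i'" using j cover by blast
        have jb: "cball (xs j) R \<subseteq> cball (cc i') (\<rho> i')" using I[OF i'(1)] i'(2) by auto
        have "sphere (cc i) r \<inter> cball (cc i') (\<rho> i') = {}"
        proof (cases "i = i'")
          case True then show ?thesis using r by auto
        next
          case False
          show ?thesis
          proof (rule ccontr)
            assume "sphere (cc i) r \<inter> cball (cc i') (\<rho> i') \<noteq> {}"
            then obtain y where "y \<in> sphere (cc i) r" "y \<in> cball (cc i') (\<rho> i')" by blast
            then have "dist (cc i) y = r" "dist (cc i') y \<le> \<rho> i'" by auto
            moreover have "\<rho> i' \<le> t * \<rho> i'" using I[OF i'(1)] t1 by (simp add: mult_le_cancel_right1)
            ultimately have "dist (cc i) (cc i') < t * (\<rho> i + \<rho> i')"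
              using dist_triangle3[of "cc i" "cc i'" y] r by (simp add: distrib_left dist_commute)
            then show False using sep[OF i i'(1) False] by simp
          qed
        qed
        then show ?thesis using jb by blast
      qed
      show "sum lam (G i) \<le> (\<Sum>j\<in>{j\<in>{1..N}. cball (xs j) R \<subseteq> ball (cc i) r}. lam j)"
        if r: "r \<in> {\<rho> i<..<t * \<rho> i}" for r
      proof (rule sum_mono2)
        show "finite {j\<in>{1..N}. cball (xs j) R \<subseteq> ball (cc i) r}" by simp
        show "G i \<subseteq> {j\<in>{1..N}. cball (xs j) R \<subseteq> ball (cc i) r}"
        proof
          fix j assume j: "j \<in> G i"
          have "cball (xs j) R \<subseteq> cball (cc i) (\<rho> i)" using Ii j by auto
          also have "\<dots> \<subseteq> ball (cc i) r" using r by (auto simp: subset_eq)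
          finally show "j \<in> {j\<in>{1..N}. cball (xs j) R \<subseteq> ball (cc i) r}" using Ii j by auto
        qed
        show "0 \<le> lam b" if "b \<in> {j\<in>{1..N}. cball (xs j) R \<subseteq> ball (cc i) r} - G i" for b
          using that lam by auto
      qed
    qed
    moreover have "t * \<rho> i / \<rho> i = t" using Ii by simp
    ultimately show ?thesis by simp
  qed
  have lnt: "0 \<le> ln t" using t1 by simp
  have lamG: "0 \<le> lam x" if "i \<in> I" "x \<in> G i" for i x
  proof -
    have "x \<in> {1..N}" using I[OF that(1)] that(2) by blast
    then show ?thesis by (rule lam)
  qed
  have "ennreal ((\<Sum>j\<in>{1..N}. lam j) * ln t) = ennreal (\<Sum>i\<in>I. sum lam (G i) * ln t)"
  proof -
    have "(\<Sum>j\<in>{1..N}. lam j) * ln t = (\<Sum>i\<in>I. sum lam (G i) * ln t)"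
      by (simp only: cfg_sum[OF cfg, symmetric] sum_distrib_right)
    then show ?thesis by (rule arg_cong)
  qed
  also have "\<dots> = (\<Sum>i\<in>I. ennreal (sum lam (G i) * ln t))"
    using lamG lnt by (subst sum_ennreal) (auto intro!: mult_nonneg_nonneg sum_nonneg)
  also have "\<dots> \<le> (\<Sum>i\<in>I. FH (A i))" by (intro sum_mono Abound)
  finally have "FH W + ennreal ((\<Sum>j\<in>{1..N}. lam j) * ln t) \<le> FH W + (\<Sum>i\<in>I. FH (A i))"
    by (rule add_left_mono)
  also have "\<dots> \<le> FH (UNIV - (\<Union>i\<in>I. cball (cc i) (\<rho> i)))"
    by (rule FH_disj_sum[OF fin Am Wm disj WA sub])
  finally show ?thesis unfolding W_def .
qed

lemma ennreal_ln_mono: "0 \<le> L \<Longrightarrow> 0 < x \<Longrightarrow> x \<le> y \<Longrightarrow> ennreal (L * ln x) \<le> ennreal (L * ln y)"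
  by (intro ennreal_leI mult_left_mono) auto

lemma main_ind:
  "card I = k \<Longrightarrow> cfgc I cc \<rho> G \<Longrightarrow>
    ennreal ((\<Sum>j\<in>{1..N}. lam j) * ln (R0 / (3^(k-1) * Max (\<rho> ` I))))
      \<le> FH (UNIV - (\<Union>i\<in>I. cball (cc i) (\<rho> i)))"
proof (induction k arbitrary: I cc \<rho> G)
  case 0
  then show ?case unfolding cfg_def by auto
next
  case (Suc k)
  note cfg = Suc.prems(2)
  have fin: "finite I" and Ine: "I \<noteq> {}" and I: "\<And>i. i \<in> I \<Longrightarrow> cc i \<in> X \<and> 0 < \<rho> i \<and> G i \<subseteq> {1..N} \<and>
      (\<forall>j\<in>G i. cball (xs j) R \<subseteq> cball (cc i) (\<rho> i))"
    and Gdisj: "\<And>i i'. i \<in> I \<Longrightarrow> i' \<in> I \<Longrightarrow> i \<noteq> i' \<Longrightarrow> G i \<inter> G i' = {}"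
    and cover: "(\<Union>i\<in>I. G i) = {1..N}"
    using cfg unfolding cfg_def by auto
  define \<Lambda> where "\<Lambda> = (\<Sum>j\<in>{1..N}. lam j)"
  have \<Lambda>: "0 \<le> \<Lambda>" unfolding \<Lambda>_def using lam by (intro sum_nonneg) auto
  define M where "M = Max (\<rho> ` I)"
  have MI: "M \<in> \<rho> ` I" unfolding M_def using fin Ine by (intro Max_in) auto
  have Mpos: "0 < M" using MI I by auto
  have leM: "\<rho> i \<le> M" if "i \<in> I" for i unfolding M_def using fin that by (intro Max_ge) auto
  have p3: "(1::real) \<le> 3 ^ k" by simp
  let ?goal = "ennreal (\<Lambda> * ln (R0 / (3^k * M)))"
  have goal_eq: "?case = (?goal \<le> FH (UNIV - (\<Union>i\<in>I. cball (cc i) (\<rho> i))))"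
    by (simp add: \<Lambda>_def M_def)
  show ?case
  proof (cases "R0 / (3^k * M) \<le> 1")
    case True
    have "\<Lambda> * ln (R0 / (3^k * M)) \<le> 0"
      using True \<Lambda> R0 Mpos by (intro mult_nonneg_nonpos) auto
    then have "?goal = 0" by (simp add: ennreal_eq_0_iff)
    then show ?thesis unfolding goal_eq by simp
  next
    case False
    then have big: "3^k * M < R0" using Mpos by (simp add: field_simps)
    then have MR0: "M < R0" using p3 Mpos by (smt (verit) mult_le_cancel_right1)
    define q where "q = (\<lambda>i i'. dist (cc i) (cc i') / (\<rho> i + \<rho> i'))"
    have qsym: "q i i' = q i' i" for i i' by (simp add: q_def dist_commute add.commute)
    have qdist: "dist (cc i) (cc i') = q i i' * (\<rho> i + \<rho> i')" if "i \<in> I" "i' \<in> I" for i i'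
      using I[OF that(1)] I[OF that(2)] by (simp add: q_def)
    show ?thesis
    proof (cases "\<forall>i\<in>I. \<forall>i'\<in>I. i \<noteq> i' \<longrightarrow> R0 / M \<le> q i i'")
      case True
      define t where "t = R0 / M"
      have t1: "1 \<le> t" using MR0 Mpos by (simp add: t_def)
      have tR: "t * \<rho> i \<le> R0" if "i \<in> I" for i
        using leM[OF that] Mpos R0 I[OF that] by (simp add: t_def field_simps)
      have sep: "t * (\<rho> i + \<rho> i') \<le> dist (cc i) (cc i')" if "i \<in> I" "i' \<in> I" "i \<noteq> i'" for i i'
      proof -
        have "t \<le> q i i'" using True that by (simp add: t_def)
        then have "t * (\<rho> i + \<rho> i') \<le> q i i' * (\<rho> i + \<rho> i')"
          using I[OF that(1)] I[OF that(2)] by (intro mult_right_mono) auto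
        then show ?thesis using qdist[OF that(1,2)] by simp
      qed
      have "?goal \<le> ennreal (\<Lambda> * ln t)"
        using \<Lambda> big Mpos p3 R0 unfolding t_def
        by (intro ennreal_ln_mono) (auto simp: field_simps intro!: divide_left_mono mult_pos_pos)
      also have "\<dots> \<le> FH (UNIV - (\<Union>i\<in>I. cball (cc i) (t * \<rho> i))) + ennreal (\<Lambda> * ln t)" by simp
      also have "\<dots> \<le> FH (UNIV - (\<Union>i\<in>I. cball (cc i) (\<rho> i)))"
        unfolding \<Lambda>_def by (rule growth[OF cfg t1 tR sep])
      finally show ?thesis unfolding goal_eq .
    next
      case False
      define P where "P = {p \<in> I \<times> I. fst p \<noteq> snd p}"
      have Pfin: "finite P" unfolding P_def using fin by (auto intro: finite_subset[of _ "I \<times> I"])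
      have Pne: "P \<noteq> {}" using False by (auto simp: P_def)
      define m where "m = Min ((\<lambda>p. q (fst p) (snd p)) ` P)"
      have "m \<in> (\<lambda>p. q (fst p) (snd p)) ` P" unfolding m_def using Pfin Pne by (intro Min_in) auto
      then obtain p0 where p0: "p0 \<in> P" "m = q (fst p0) (snd p0)" by auto
      have mle: "m \<le> q i i'" if "i \<in> I" "i' \<in> I" "i \<noteq> i'" for i i'
        unfolding m_def using Pfin that by (intro Min_le) (auto simp: P_def image_iff intro!: bexI[of _ "(i, i')"])
      have mlt: "m < R0 / M"
      proof -
        obtain i i' where "i \<in> I" "i' \<in> I" "i \<noteq> i'" "q i i' < R0 / M" using False by auto
        then show ?thesis using mle by fastforce
      qed
      obtain a b where ab: "a \<in> I" "b \<in> I" "a \<noteq> b" "\<rho> b \<le> \<rho> a" "q a b = m"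
      proof (cases "\<rho> (snd p0) \<le> \<rho> (fst p0)")
        case True then show ?thesis using that[of "fst p0" "snd p0"] p0 by (auto simp: P_def)
      next
        case False then show ?thesis using that[of "snd p0" "fst p0"] p0 qsym by (auto simp: P_def)
      qed
      define t where "t = max 1 m"
      have t1: "1 \<le> t" by (simp add: t_def)
      have mt: "m \<le> t" by (simp add: t_def)
      have step1: "FH (UNIV - (\<Union>i\<in>I. cball (cc i) (t * \<rho> i))) + ennreal (\<Lambda> * ln t)
          \<le> FH (UNIV - (\<Union>i\<in>I. cball (cc i) (\<rho> i)))"
      proof (cases "1 \<le> m")
        case True
        then have tm: "t = m" by (simp add: t_def)
        have tR: "t * \<rho> i \<le> R0" if "i \<in> I" for i
        proof -
          have "t * \<rho> i \<le> t * M" using leM[OF that] t1 by (intro mult_left_mono) auto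
          also have "\<dots> \<le> R0" using mlt Mpos tm by (simp add: field_simps)
          finally show ?thesis .
        qed
        have sep: "t * (\<rho> i + \<rho> i') \<le> dist (cc i) (cc i')" if "i \<in> I" "i' \<in> I" "i \<noteq> i'" for i i'
        proof -
          have "t * (\<rho> i + \<rho> i') \<le> q i i' * (\<rho> i + \<rho> i')"
            using I[OF that(1)] I[OF that(2)] mle[OF that] tm by (intro mult_right_mono) auto
          then show ?thesis using qdist[OF that(1,2)] by simp
        qed
        show ?thesis unfolding \<Lambda>_def by (rule growth[OF cfg t1 tR sep])
      next
        case False
        then have "t = 1" by (simp add: t_def)
        then show ?thesis by simp
      qed
      define I' where "I' = I - {b}"
      define \<rho>' where "\<rho>' = (\<lambda>i. if i = a then t * (\<rho> a + 2 * \<rho> b) else t * \<rho> i)"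
      define G' where "G' = G(a := G a \<union> G b)"
      have dab: "dist (cc a) (cc b) \<le> t * (\<rho> a + \<rho> b)"
      proof -
        have "dist (cc a) (cc b) = m * (\<rho> a + \<rho> b)" using qdist[OF ab(1,2)] ab(5) by simp
        also have "\<dots> \<le> t * (\<rho> a + \<rho> b)" using mt I[OF ab(1)] I[OF ab(2)] by (intro mult_right_mono) auto
        finally show ?thesis .
      qed
      have ba: "cball (cc b) (t * \<rho> b) \<subseteq> cball (cc a) (\<rho>' a)"
      proof
        fix y assume "y \<in> cball (cc b) (t * \<rho> b)"
        then have "dist (cc b) y \<le> t * \<rho> b" by simp
        then have "dist (cc a) y \<le> t * (\<rho> a + \<rho> b) + t * \<rho> b"
          using dab dist_triangle[of "cc a" y "cc b"] by linarith
        then show "y \<in> cball (cc a) (\<rho>' a)" by (simp add: \<rho>'_def algebra_simps)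
      qed
      have tsub: "cball (cc i) (\<rho> i) \<subseteq> cball (cc i) (t * \<rho> i)" if "i \<in> I" for i
        using I[OF that] t1 by (intro subset_cball) (simp add: mult_le_cancel_right1)
      have aa: "cball (cc a) (t * \<rho> a) \<subseteq> cball (cc a) (\<rho>' a)"
        using I[OF ab(2)] t1 by (intro subset_cball) (simp add: \<rho>'_def)
      have c0: "finite I'" "I' \<noteq> {}" using fin ab by (auto simp: I'_def)
      have c1: "cc i \<in> X \<and> 0 < \<rho>' i \<and> G' i \<subseteq> {1..N} \<and> (\<forall>j\<in>G' i. cball (xs j) R \<subseteq> cball (cc i) (\<rho>' i))"
        if i: "i \<in> I'" for i
      proof -
        from i have iI: "i \<in> I" by (simp add: I'_def)
        have "cc i \<in> X" using I[OF iI] by simp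
        moreover have "0 < \<rho>' i" using I[OF iI] I[OF ab(1)] I[OF ab(2)] t1 by (simp add: \<rho>'_def)
        moreover have "G' i \<subseteq> {1..N}" using I[OF iI] I[OF ab(2)] by (auto simp: G'_def)
        moreover have "\<forall>j\<in>G' i. cball (xs j) R \<subseteq> cball (cc i) (\<rho>' i)"
        proof
          fix j assume j: "j \<in> G' i"
          show "cball (xs j) R \<subseteq> cball (cc i) (\<rho>' i)"
          proof (cases "i = a")
            case True
            show ?thesis
            proof (cases "j \<in> G a")
              case True
              then have "cball (xs j) R \<subseteq> cball (cc a) (\<rho> a)" using I[OF ab(1)] by auto
              also have "\<dots> \<subseteq> cball (cc a) (t * \<rho> a)" by (rule tsub[OF ab(1)])
              also have "\<dots> \<subseteq> cball (cc a) (\<rho>' a)" by (rule aa)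
              finally show ?thesis using \<open>i = a\<close> by simp
            next
              case False
              then have "j \<in> G b" using j \<open>i = a\<close> by (simp add: G'_def)
              then have "cball (xs j) R \<subseteq> cball (cc b) (\<rho> b)" using I[OF ab(2)] by auto
              also have "\<dots> \<subseteq> cball (cc b) (t * \<rho> b)" by (rule tsub[OF ab(2)])
              also have "\<dots> \<subseteq> cball (cc a) (\<rho>' a)" by (rule ba)
              finally show ?thesis using \<open>i = a\<close> by simp
            qed
          next
            case False
            then have "j \<in> G i" using j by (simp add: G'_def)
            then have "cball (xs j) R \<subseteq> cball (cc i) (\<rho> i)" using I[OF iI] by auto
            also have "\<dots> \<subseteq> cball (cc i) (t * \<rho> i)" by (rule tsub[OF iI])
            finally show ?thesis using False by (simp add: \<rho>'_def)
          qed
        qed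
        ultimately show ?thesis by blast
      qed
      have c2: "G' i \<inter> G' i' = {}" if i: "i \<in> I'" and i': "i' \<in> I'" and ne: "i \<noteq> i'" for i i'
      proof -
        from i i' have "i \<in> I" "i' \<in> I" "i \<noteq> b" "i' \<noteq> b" by (auto simp: I'_def)
        then show "G' i \<inter> G' i' = {}"
          using Gdisj ne ab by (auto simp: G'_def)
      qed
      have c3: "(\<Union>i\<in>I'. G' i) = {1..N}"
        proof -
          have "(\<Union>i\<in>I'. G' i) = (\<Union>i\<in>I. G i)"
          proof (intro equalityI subsetI)
            fix x assume "x \<in> (\<Union>i\<in>I'. G' i)"
            then obtain i where "i \<in> I'" "x \<in> G' i" by auto
            then show "x \<in> (\<Union>i\<in>I. G i)" using ab by (auto simp: I'_def G'_def split: if_splits)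
          next
            fix x assume "x \<in> (\<Union>i\<in>I. G i)"
            then obtain i where i: "i \<in> I" "x \<in> G i" by auto
            show "x \<in> (\<Union>i\<in>I'. G' i)"
            proof (cases "i = b \<or> i = a")
              case True
              then have "x \<in> G' a" using i by (auto simp: G'_def)
              moreover have "a \<in> I'" using ab by (simp add: I'_def)
              ultimately show ?thesis by blast
            next
              case False
              then have "x \<in> G' i" "i \<in> I'" using i by (auto simp: G'_def I'_def)
              then show ?thesis by blast
            qed
          qed
          then show ?thesis using cover by simp
        qed
      have cfg': "cfgc I' cc \<rho>' G'" unfolding cfg_def using c0 c1 c2 c3 by blast
      have cardI': "card I' = k" using Suc.prems(1) ab(2) fin by (simp add: I'_def)
      have IH: "ennreal (\<Lambda> * ln (R0 / (3^(k-1) * Max (\<rho>' ` I'))))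
          \<le> FH (UNIV - (\<Union>i\<in>I'. cball (cc i) (\<rho>' i)))"
        using Suc.IH[OF cardI' cfg'] by (simp add: \<Lambda>_def)
      have Wsub: "UNIV - (\<Union>i\<in>I'. cball (cc i) (\<rho>' i)) \<subseteq> UNIV - (\<Union>i\<in>I. cball (cc i) (t * \<rho> i))"
      proof -
        have "cball (cc i) (t * \<rho> i) \<subseteq> (\<Union>i\<in>I'. cball (cc i) (\<rho>' i))" if "i \<in> I" for i
        proof (cases "i = b")
          case True
          have "a \<in> I'" using ab by (simp add: I'_def)
          then show ?thesis using ba True by blast
        next
          case False
          then have iI': "i \<in> I'" using that by (simp add: I'_def)
          show ?thesis
          proof (cases "i = a")
            case True then show ?thesis using aa iI' by blast
          next
            case False then show ?thesis using iI' by (auto simp: \<rho>'_def)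
          qed
        qed
        then show ?thesis by blast
      qed
      have kpos: "k \<ge> 1"
      proof -
        have "{a, b} \<subseteq> I" using ab by auto
        then have "card {a, b} \<le> card I" using fin by (rule card_mono[rotated])
        then show ?thesis using Suc.prems(1) ab(3) by simp
      qed
      have M'fin: "finite (\<rho>' ` I')" "\<rho>' ` I' \<noteq> {}" using cfg' unfolding cfg_def by auto
      have M'pos: "0 < Max (\<rho>' ` I')"
      proof -
        have "Max (\<rho>' ` I') \<in> \<rho>' ` I'" using M'fin by (rule Max_in)
        then obtain i where "i \<in> I'" "Max (\<rho>' ` I') = \<rho>' i" by auto
        then show ?thesis using c1 by metis
      qed
      have M'le: "Max (\<rho>' ` I') \<le> 3 * t * M"
      proof (subst Max_le_iff[OF M'fin], intro ballI)
        fix x assume "x \<in> \<rho>' ` I'"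
        then obtain i where i: "i \<in> I'" "x = \<rho>' i" by auto
        then have iI: "i \<in> I" by (simp add: I'_def)
        show "x \<le> 3 * t * M"
        proof (cases "i = a")
          case True
          have "\<rho> a + 2 * \<rho> b \<le> 3 * M" using leM[OF ab(1)] leM[OF ab(2)] by simp
          then have "t * (\<rho> a + 2 * \<rho> b) \<le> t * (3 * M)" using t1 by (intro mult_left_mono) auto
          then show ?thesis using i True by (simp add: \<rho>'_def)
        next
          case False
          have "t * \<rho> i \<le> t * (3 * M)" using leM[OF iI] Mpos t1 by (intro mult_left_mono) auto
          then show ?thesis using i False by (simp add: \<rho>'_def)
        qed
      qed
      have tpos: "0 < t" using t1 by simp
      have pk: "(3::real) ^ k = 3 * 3 ^ (k - 1)" using kpos by (cases k) auto
      define y where "y = R0 / (3^k * t * M)"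
      have ypos: "0 < y" unfolding y_def using R0 tpos Mpos by simp
      have split: "R0 / (3^k * M) = t * y" unfolding y_def using tpos by (simp add: field_simps)
      have "?goal = ennreal (\<Lambda> * ln t + \<Lambda> * ln y)"
        using split tpos ypos by (simp add: ln_mult distrib_left)
      also have "\<dots> \<le> ennreal (\<Lambda> * ln t) + ennreal (\<Lambda> * ln y)"
        using \<Lambda> t1 by (intro ennreal_plus_le) simp
      also have "ennreal (\<Lambda> * ln y) \<le> ennreal (\<Lambda> * ln (R0 / (3^(k-1) * Max (\<rho>' ` I'))))"
      proof (rule ennreal_ln_mono[OF \<Lambda> ypos])
        have "3^(k-1) * Max (\<rho>' ` I') \<le> 3^(k-1) * (3 * t * M)" using M'le by simp
        also have "\<dots> = 3^k * t * M" using pk by simp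
        finally have "3^(k-1) * Max (\<rho>' ` I') \<le> 3^k * t * M" .
        then show "y \<le> R0 / (3^(k-1) * Max (\<rho>' ` I'))"
          unfolding y_def using R0 M'pos tpos Mpos by (intro divide_left_mono) (auto intro!: mult_pos_pos)
      qed
      also note IH
      also have "FH (UNIV - (\<Union>i\<in>I'. cball (cc i) (\<rho>' i))) \<le> FH (UNIV - (\<Union>i\<in>I. cball (cc i) (t * \<rho> i)))"
        by (rule FH_mono[OF Wsub])
      finally have "?goal \<le> ennreal (\<Lambda> * ln t) + FH (UNIV - (\<Union>i\<in>I. cball (cc i) (t * \<rho> i)))"
        by (simp add: add_left_mono)
      also have "\<dots> \<le> FH (UNIV - (\<Union>i\<in>I. cball (cc i) (\<rho> i)))" using step1 by (simp add: add.commute)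
      finally show ?thesis unfolding goal_eq .
    qed
  qed
qed

end

theorem lemma9p3:
  fixes X :: "'a::euclidean_space set"
    and R0 R :: real and N :: nat
    and xs :: "nat \<Rightarrow> 'a" and lam :: "nat \<Rightarrow> real" and h :: "'a \<Rightarrow> real"
  assumes dim: "DIM('a) \<ge> 2"
    and R0: "R0 > 0"
    and N: "N \<ge> 1"
    and R: "0 < R" "R \<le> 3 powr (1 - real N) * R0"
    and xs: "\<And>j. j \<in> {1..N} \<Longrightarrow> xs j \<in> X"
    and lam: "\<And>j. j \<in> {1..N} \<Longrightarrow> lam j \<ge> 0"
    and h_meas: "h \<in> borel_measurable
        (restrict_space borel ({y. infdist y X \<le> R0} - (\<Union>j\<in>{1..N}. cball (xs j) R)))"
    and h_nonneg: "\<And>y. y \<in> {y. infdist y X \<le> R0} - (\<Union>j\<in>{1..N}. cball (xs j) R) \<Longrightarrow> h y \<ge> 0"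
    and h_sphere: "\<And>x r. x \<in> X \<Longrightarrow> 0 < r \<Longrightarrow> r \<le> R0 \<Longrightarrow>
        (\<forall>j\<in>{1..N}. sphere x r \<inter> cball (xs j) R = {}) \<Longrightarrow>
        sphere_integral h x r \<ge>
          ennreal ((1 / r) * (\<Sum>j\<in>{j\<in>{1..N}. cball (xs j) R \<subseteq> ball x r}. lam j))"
  shows "(\<integral>\<^sup>+ y. ennreal (h y) *
            indicator ({y. infdist y X \<le> R0} - (\<Union>j\<in>{1..N}. cball (xs j) R)) y \<partial>lborel)
         \<ge> ennreal (ln (R0 / (3 ^ (N - 1) * R)) * (\<Sum>j\<in>{1..N}. lam j))"
proof -
  have key: "ennreal ((\<Sum>j\<in>{1..N}. lam j) * ln (R0 / (3^(N-1) * Max ((\<lambda>_. R) ` {1..N}))))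
     \<le> (\<integral>\<^sup>+ y. ennreal (h y) * indicator ({y. infdist y X \<le> R0} - (\<Union>j\<in>{1..N}. cball (xs j) R)) y
            * indicator (UNIV - (\<Union>i\<in>{1..N}. cball (xs i) R)) y \<partial>lborel)"
    apply (rule main_ind[where G="\<lambda>j. {j}"])
    subgoal by (rule R0)
    subgoal using lam by blast
    subgoal by (rule h_meas)
    subgoal by (rule h_sphere)
    subgoal by simp
    subgoal using xs N R by (auto simp: cfg_def)
    done
  have MR: "Max ((\<lambda>_. R) ` {1..N}) = R" using N by auto
  have "(\<integral>\<^sup>+ y. ennreal (h y) * indicator ({y. infdist y X \<le> R0} - (\<Union>j\<in>{1..N}. cball (xs j) R)) y
            * indicator (UNIV - (\<Union>i\<in>{1..N}. cball (xs i) R)) y \<partial>lborel)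
      \<le> (\<integral>\<^sup>+ y. ennreal (h y) *
            indicator ({y. infdist y X \<le> R0} - (\<Union>j\<in>{1..N}. cball (xs j) R)) y \<partial>lborel)"
    by (intro nn_integral_mono) (auto simp: indicator_def)
  then show ?thesis using key MR by (simp add: mult.commute)
qed

end
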